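(* Let $L \ge 1$ and let $\mathcal{N} = \mathcal{N}(0, I_L)$ denote the $L$-dimensional standard Gaussian distribution. Let $\mathsf{Adv}$ be a class of distinguishers (e.g. all probabilistic polynomial-time adversaries) and let $\varepsilon \ge 0$, $t \ge 1$. Let $\mathcal{W}$ be a latent watermarking scheme, viewed as a distribution on $\mathbb{R}^L$ from which watermarked initial latents $Z \leftarrow \mathcal{W}$ are sampled. Let $\mathcal{W}^{\mathrm{sem}}$ be its SemBind variant: it samples $Z \leftarrow \mathcal{W}$, independently samples randomness determining a sign mask $S \in \{-1,+1\}^L$ and a permutation $\pi$ of $\{1,\dots,L\}$, and outputs $Z^{\mathrm{sem}} = F_{S,\pi}(Z) := P_\pi \,\mathrm{Diag}(S)\, Z$, where $P_\pi$ is the permutation matrix of $\pi$. In the multi-sample setting, the $t$ outputs are $F_{S_i,\pi_i}(Z_i)$, $i=1,\dots,t$, where $Z_1,\dots,Z_t$ are i.i.d. from $\mathcal{W}$ and the pairs $\{(S_i,\pi_i)\}_{i=1}^t$ (which may be arbitrarily correlated or shared across $i$, and may force some entries of $S_i$ to $+1$) are jointly independent of $\{Z_i\}_{i=1}^t$. Then: (1) If $\mathcal{W}$ is single-sample $(\varepsilon,\mathsf{Adv})$-undetectable, then $\mathcal{W}^{\mathrm{sem}}$ is single-sample $(\varepsilon,\mathsf{Adv})$-undetectable. (2) If $\mathcal{W}$ is multi-sample $(t,\varepsilon,\mathsf{Adv})$-undetectable, then $\mathcal{W}^{\mathrm{sem}}$ is multi-sample $(t,\varepsilon,\mathsf{A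dv})$-undetectable.
   Context: Single-sample undetectability: a scheme producing a random vector $Z \in \mathbb{R}^L$ is single-sample $(\varepsilon,\mathsf{Adv})$-undetectable if for every distinguisher $D \in \mathsf{Adv}$, $\bigl|\Pr[D(Z)=1] - \Pr[D(G)=1]\bigr| \le \varepsilon$, where $Z$ is drawn from the scheme and $G \leftarrow \mathcal{N}(0,I_L)$. Multi-sample undetectability: the scheme is multi-sample $(t,\varepsilon,\mathsf{Adv})$-undetectable if for every $D \in \mathsf{Adv}$, $\bigl|\Pr[D(Z_1,\dots,Z_t)=1] - \Pr[D(G_1,\dots,G_t)=1]\bigr| \le \varepsilon$, where $Z_1,\dots,Z_t$ are i.i.d. outputs of the scheme and $G_1,\dots,G_t$ are i.i.d. $\mathcal{N}(0,I_L)$. For the SemBind variant, the relevant outputs are the transformed latents $F_{S,\pi}(Z)$ (resp. $(F_{S_i,\pi_i}(Z_i))_{i=1}^t$), compared against i.i.d. standard Gaussians in the same way. *)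

theory Defs
  imports "HOL-Probability.Probability"
begin

(* Vectors in R^L: functions 'n => real over a finite index type 'n with CARD('n) = L. *)

definition vec_space :: "('n::finite \<Rightarrow> real) measure" where
  "vec_space = (\<Pi>\<^sub>M i\<in>UNIV. (borel :: real measure))"

definition std_gauss :: "('n::finite \<Rightarrow> real) measure" where
  "std_gauss = (\<Pi>\<^sub>M i\<in>UNIV. density lborel std_normal_density)"

definition tuple_space :: "nat \<Rightarrow> (nat \<Rightarrow> 'n::finite \<Rightarrow> real) measure" where
  "tuple_space t = (\<Pi>\<^sub>M i\<in>{..<t}. vec_space)"

definition iid :: "nat \<Rightarrow> ('n::finite \<Rightarrow> real) measure \<Rightarrow> (nat \<Rightarrow> 'n \<Rightarrow> real) measure" where
  "iid t M = (\<Pi>\<^sub>M i\<in>{..<t}. M)"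

(* sign mask encoded as s :: 'n => bool, True meaning -1 *)
definition sign_of :: "bool \<Rightarrow> real" where
  "sign_of b = (if b then -1 else 1)"

(* F_{S,pi}(z) = P_pi Diag(S) z, with (P_pi x)_{pi j} = x_j *)
definition sem_F :: "('n::finite \<Rightarrow> bool) \<times> ('n \<Rightarrow> 'n) \<Rightarrow> ('n \<Rightarrow> real) \<Rightarrow> ('n \<Rightarrow> real)" where
  "sem_F sp z = (\<lambda>i. sign_of (fst sp (inv (snd sp) i)) * z (inv (snd sp) i))"

(* a (randomized) distinguisher on a measurable space M: its acceptance probability
   x \<mapsto> Pr[D(x) = 1], a measurable map into [0,1] *)
definition distinguisher :: "'a measure \<Rightarrow> ('a \<Rightarrow> real) \<Rightarrow> bool" where
  "distinguisher M D \<longleftrightarrow> D \<in> borel_measurable M \<and> (\<forall>x\<in>space M. 0 \<le> D x \<and> D x \<le> 1)"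

definition single_undetectable ::
  "('n::finite \<Rightarrow> real) measure \<Rightarrow> real \<Rightarrow> (('n \<Rightarrow> real) \<Rightarrow> real) set \<Rightarrow> bool" where
  "single_undetectable Z eps Adv \<longleftrightarrow>
     (\<forall>D\<in>Adv. \<bar>(\<integral>x. D x \<partial>Z) - (\<integral>x. D x \<partial>std_gauss)\<bar> \<le> eps)"

definition multi_undetectable_joint ::
  "nat \<Rightarrow> (nat \<Rightarrow> 'n::finite \<Rightarrow> real) measure \<Rightarrow> real \<Rightarrow> ((nat \<Rightarrow> 'n \<Rightarrow> real) \<Rightarrow> real) set \<Rightarrow> bool" where
  "multi_undetectable_joint t J eps Adv \<longleftrightarrow>
     (\<forall>D\<in>Adv. \<bar>(\<integral>x. D x \<partial>J) - (\<integral>x. D x \<partial>iid t std_gauss)\<bar> \<le> eps)"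

definition multi_undetectable ::
  "nat \<Rightarrow> ('n::finite \<Rightarrow> real) measure \<Rightarrow> real \<Rightarrow> ((nat \<Rightarrow> 'n \<Rightarrow> real) \<Rightarrow> real) set \<Rightarrow> bool" where
  "multi_undetectable t W eps Adv \<longleftrightarrow> multi_undetectable_joint t (iid t W) eps Adv"

definition sembind ::
  "('n::finite \<Rightarrow> real) measure \<Rightarrow> (('n \<Rightarrow> bool) \<times> ('n \<Rightarrow> 'n)) pmf \<Rightarrow> ('n \<Rightarrow> real) measure" where
  "sembind W R = distr (W \<Otimes>\<^sub>M measure_pmf R) vec_space (\<lambda>(z, sp). sem_F sp z)"

definition sembind_multi ::
  "nat \<Rightarrow> ('n::finite \<Rightarrow> real) measure \<Rightarrow> (nat \<Rightarrow> ('n \<Rightarrow> bool) \<times> ('n \<Rightarrow> 'n)) pmf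
     \<Rightarrow> (nat \<Rightarrow> 'n \<Rightarrow> real) measure" where
  "sembind_multi t W Rt = distr (iid t W \<Otimes>\<^sub>M measure_pmf Rt) (tuple_space t)
     (\<lambda>(zs, sps). \<lambda>i\<in>{..<t}. sem_F (sps i) (zs i))"

end

theory Submission
  imports Defs
begin


abbreviation N1 :: "real measure" where "N1 \<equiv> density lborel std_normal_density"

lemma N1_prob: "prob_space N1"
  using prob_space_normal_density by simp

lemma sets_N1: "sets N1 = sets borel" by simp

lemma N1_uminus: "distr N1 N1 uminus = N1"
proof -
  have "density (distr lborel borel uminus) (\<lambda>x. ennreal (std_normal_density x))
      = distr (density lborel (\<lambda>x. ennreal (std_normal_density (- x)))) borel uminus"
    by (rule density_distr) auto
  then have "N1 = distr N1 borel uminus"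
    by (simp add: lborel_distr_uminus std_normal_density_def)
  then show ?thesis
    by (metis (no_types, lifting) distr_cong sets_N1)
qed

lemma N1_sign: "distr N1 N1 (\<lambda>x. sign_of b * x) = N1"
proof (cases b)
  case True
  then have "distr N1 N1 (\<lambda>x. sign_of b * x) = distr N1 N1 uminus"
    by (intro distr_cong) (auto simp: sign_of_def)
  then show ?thesis using N1_uminus by simp
next
  case False
  then have "distr N1 N1 (\<lambda>x. sign_of b * x) = distr N1 N1 (\<lambda>x. x)"
    by (intro distr_cong) (auto simp: sign_of_def)
  then show ?thesis by simp
qed

lemma distr_PiM_comp:
  fixes M :: "'a measure"
  assumes I: "finite I" and M: "prob_space M"
    and f: "\<And>i. i \<in> I \<Longrightarrow> f i \<in> measurable M M"
    and d: "\<And>i. i \<in> I \<Longrightarrow> distr M M (f i) = M"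
  shows "distr (PiM I (\<lambda>_. M)) (PiM I (\<lambda>_. M)) (\<lambda>x. \<lambda>i\<in>I. f i (x i)) = PiM I (\<lambda>_. M)"
proof -
  interpret product_sigma_finite "\<lambda>_. M"
    using M unfolding product_sigma_finite_def by (simp add: prob_space_imp_sigma_finite)
  have meas: "(\<lambda>x. \<lambda>i\<in>I. f i (x i)) \<in> measurable (PiM I (\<lambda>_. M)) (PiM I (\<lambda>_. M))"
    using f by (intro measurable_restrict) (auto intro: measurable_compose[OF measurable_component_singleton])
  show ?thesis
  proof (rule PiM_eqI[OF I])
    show "sets (distr (PiM I (\<lambda>_. M)) (PiM I (\<lambda>_. M)) (\<lambda>x. \<lambda>i\<in>I. f i (x i))) = sets (PiM I (\<lambda>_. M))"
      by simp
    fix A assume A: "\<And>i. i \<in> I \<Longrightarrow> A i \<in> sets M"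
    have pre: "(\<lambda>x. \<lambda>i\<in>I. f i (x i)) -` Pi\<^sub>E I A \<inter> space (PiM I (\<lambda>_. M))
        = Pi\<^sub>E I (\<lambda>i. f i -` A i \<inter> space M)"
      by (auto simp: space_PiM PiE_iff)
    have "emeasure (distr (PiM I (\<lambda>_. M)) (PiM I (\<lambda>_. M)) (\<lambda>x. \<lambda>i\<in>I. f i (x i))) (Pi\<^sub>E I A)
        = emeasure (PiM I (\<lambda>_. M)) (Pi\<^sub>E I (\<lambda>i. f i -` A i \<inter> space M))"
      using A I by (subst emeasure_distr[OF meas]) (auto simp: pre intro!: sets_PiM_I_finite)
    also have "\<dots> = (\<Prod>i\<in>I. emeasure M (f i -` A i \<inter> space M))"
      using A f I by (intro emeasure_PiM) (auto intro: measurable_sets)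
    also have "\<dots> = (\<Prod>i\<in>I. emeasure M (A i))"
    proof (rule prod.cong[OF refl])
      fix i assume i: "i \<in> I"
      have "emeasure M (A i) = emeasure (distr M M (f i)) (A i)" using d[OF i] by simp
      also have "\<dots> = emeasure M (f i -` A i \<inter> space M)"
        using f[OF i] A[OF i] by (rule emeasure_distr)
      finally show "emeasure M (f i -` A i \<inter> space M) = emeasure M (A i)" by simp
    qed
    finally show "emeasure (distr (PiM I (\<lambda>_. M)) (PiM I (\<lambda>_. M)) (\<lambda>x. \<lambda>i\<in>I. f i (x i))) (Pi\<^sub>E I A)
        = (\<Prod>i\<in>I. emeasure M (A i))" .
  qed
qed



lemma sets_std_gauss: "sets (std_gauss :: ('n::finite \<Rightarrow> real) measure) = sets vec_space"
  unfolding std_gauss_def vec_space_def by (intro sets_PiM_cong) auto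

lemma std_gauss_prob: "prob_space (std_gauss :: ('n::finite \<Rightarrow> real) measure)"
  unfolding std_gauss_def by (intro prob_space_PiM N1_prob)

lemma gauss_inv:
  fixes s :: "'n::finite \<Rightarrow> bool" and pi :: "'n \<Rightarrow> 'n"
  assumes pi: "bij pi"
  shows "distr std_gauss vec_space (sem_F (s, pi)) = (std_gauss :: ('n \<Rightarrow> real) measure)"
proof -
  define G :: "('n \<Rightarrow> real) measure" where "G = std_gauss"
  have G: "G = PiM UNIV (\<lambda>_. N1)" unfolding G_def std_gauss_def by simp
  define flip where "flip = (\<lambda>z::'n \<Rightarrow> real. \<lambda>j\<in>UNIV. sign_of (s j) * z j)"
  define r where "r = (\<lambda>z::'n \<Rightarrow> real. \<lambda>n\<in>UNIV. z (inv pi n))"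
  have fm: "flip \<in> measurable G G"
    unfolding flip_def G by (intro measurable_restrict)
      (auto intro: measurable_compose[OF measurable_component_singleton])
  have rm: "r \<in> measurable G G"
    unfolding r_def G by (intro measurable_restrict)
      (auto intro: measurable_compose[OF measurable_component_singleton])
  have d1: "distr G G flip = G"
    unfolding flip_def G
    by (rule distr_PiM_comp) (auto simp: N1_prob N1_sign)
  have "inj (inv pi)" using pi by (simp add: bij_imp_bij_inv bij_is_inj)
  then have d2: "distr G G r = G"
    unfolding r_def G using distr_PiM_reindex[of UNIV "\<lambda>_. N1" "inv pi" UNIV] N1_prob by simp
  have eq: "sem_F (s, pi) = r \<circ> flip"
    unfolding sem_F_def r_def flip_def by (auto simp: fun_eq_iff restrict_def)
  have "distr G vec_space (sem_F (s, pi)) = distr G G (r \<circ> flip)"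
    using sets_std_gauss unfolding G_def eq by (intro distr_cong) auto
  also have "\<dots> = distr (distr G G flip) G r" using distr_distr[OF rm fm] by simp
  also have "\<dots> = G" using d1 d2 by simp
  finally show ?thesis unfolding G_def .
qed



lemma space_vec: "space (vec_space :: ('n::finite \<Rightarrow> real) measure) = UNIV"
  by (simp add: vec_space_def space_PiM)

lemma space_tuple: "space (tuple_space t :: (nat \<Rightarrow> 'n::finite \<Rightarrow> real) measure) = {..<t} \<rightarrow>\<^sub>E UNIV"
  by (simp add: tuple_space_def space_PiM space_vec)

lemma sem_F_meas: "sem_F sp \<in> measurable vec_space (vec_space :: ('n::finite \<Rightarrow> real) measure)"
proof -
  have "sem_F sp = (\<lambda>z::'n \<Rightarrow> real. \<lambda>i\<in>UNIV. sign_of (fst sp (inv (snd sp) i)) * z (inv (snd sp) i))"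
    by (auto simp: sem_F_def fun_eq_iff)
  also have "\<dots> \<in> measurable vec_space vec_space"
    unfolding vec_space_def by (intro measurable_restrict)
      (auto intro: measurable_compose[OF measurable_component_singleton])
  finally show ?thesis .
qed

lemma sem_F_meas': "sets M = sets vec_space \<Longrightarrow> sem_F sp \<in> measurable M (vec_space :: ('n::finite \<Rightarrow> real) measure)"
  using sem_F_meas measurable_cong_sets by blast

lemma Phi1_meas:
  fixes M :: "('n::finite \<Rightarrow> real) measure" and R :: "(('n \<Rightarrow> bool) \<times> ('n \<Rightarrow> 'n)) pmf"
  assumes M: "sets M = sets vec_space"
  shows "(\<lambda>(z, sp). sem_F sp z) \<in> measurable (M \<Otimes>\<^sub>M measure_pmf R) vec_space"
proof -
  have "(\<lambda>p. (\<lambda>sp p. sem_F sp (fst p)) (snd p) p) \<in> measurable (M \<Otimes>\<^sub>M measure_pmf R) vec_space"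
  proof (rule measurable_compose_countable'[where I=UNIV])
    fix sp :: "('n \<Rightarrow> bool) \<times> ('n \<Rightarrow> 'n)"
    show "(\<lambda>p. sem_F sp (fst p)) \<in> measurable (M \<Otimes>\<^sub>M measure_pmf R) vec_space"
      by (rule measurable_compose[OF measurable_fst sem_F_meas'[OF M]])
  next
    show "snd \<in> measurable (M \<Otimes>\<^sub>M measure_pmf R) (count_space UNIV)"
      by (rule measurable_compose[OF measurable_snd]) simp
  qed (rule countable_finite, simp)
  then show ?thesis by (simp add: case_prod_beta')
qed

lemma Phit_meas:
  fixes M :: "(nat \<Rightarrow> 'n::finite \<Rightarrow> real) measure" and Rt :: "(nat \<Rightarrow> ('n \<Rightarrow> bool) \<times> ('n \<Rightarrow> 'n)) pmf"
  assumes M: "sets M = sets (tuple_space t)"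
  shows "(\<lambda>(zs, sps). \<lambda>i\<in>{..<t}. sem_F (sps i) (zs i)) \<in> measurable (M \<Otimes>\<^sub>M measure_pmf Rt) (tuple_space t)"
proof -
  let ?I = "{..<t} \<rightarrow>\<^sub>E (UNIV :: (('n \<Rightarrow> bool) \<times> ('n \<Rightarrow> 'n)) set)"
  have m: "(\<lambda>p. (\<lambda>k p. \<lambda>i\<in>{..<t}. sem_F (k i) (fst p i)) (restrict (snd p) {..<t}) p)
      \<in> measurable (M \<Otimes>\<^sub>M measure_pmf Rt) (tuple_space t)"
  proof (rule measurable_compose_countable'[where I="?I"])
    fix k :: "nat \<Rightarrow> ('n \<Rightarrow> bool) \<times> ('n \<Rightarrow> 'n)"
    have "(\<lambda>p. \<lambda>i\<in>{..<t}. sem_F (k i) (fst p i)) \<in> measurable (tuple_space t \<Otimes>\<^sub>M measure_pmf Rt) (tuple_space t)"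
      unfolding tuple_space_def
      by (intro measurable_restrict measurable_compose[OF _ sem_F_meas]
          measurable_compose[OF measurable_fst measurable_component_singleton]) auto
    then show "(\<lambda>p. \<lambda>i\<in>{..<t}. sem_F (k i) (fst p i)) \<in> measurable (M \<Otimes>\<^sub>M measure_pmf Rt) (tuple_space t)"
      using M by (simp add: measurable_cong_sets[OF sets_pair_measure_cong[OF M refl] refl])
  next
    show "(\<lambda>p. restrict (snd p) {..<t}) \<in> measurable (M \<Otimes>\<^sub>M measure_pmf Rt) (count_space ?I)"
      by (rule measurable_compose[OF measurable_snd])
        (auto simp: PiE_iff extensional_def)
  qed (rule countable_finite, simp add: finite_PiE)
  have eq: "(\<lambda>p. (\<lambda>k p. \<lambda>i\<in>{..<t}. sem_F (k i) (fst p i)) (restrict (snd p) {..<t}) p)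
     = (\<lambda>(zs, sps). \<lambda>i\<in>{..<t}. sem_F (sps i) (zs i))"
    by (auto simp: fun_eq_iff restrict_def)
  show ?thesis using m unfolding eq .
qed



lemma bnd_integrable:
  assumes "finite_measure M" "h \<in> borel_measurable M" "\<And>x. \<bar>h x\<bar> \<le> (1::real)"
  shows "integrable M h"
  using assms by (intro finite_measure.integrable_const_bound[where B=1]) auto

lemma pp: "prob_space M \<Longrightarrow> pair_prob_space M (measure_pmf P)"
  by (simp add: pair_prob_space_def pair_sigma_finite_def measure_pmf.prob_space_axioms
      prob_space_imp_sigma_finite measure_pmf.sigma_finite_measure_axioms)

lemma sets_iid: "sets M = sets vec_space \<Longrightarrow> sets (iid t M) = sets (tuple_space t)"
  unfolding iid_def tuple_space_def by (intro sets_PiM_cong) auto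

lemma prob_iid: "prob_space M \<Longrightarrow> prob_space (iid t M)"
  unfolding iid_def by (intro prob_space_PiM)

lemma gauss_inv_multi:
  fixes sps :: "nat \<Rightarrow> ('n::finite \<Rightarrow> bool) \<times> ('n \<Rightarrow> 'n)"
  assumes bij: "\<forall>i<t. bij (snd (sps i))"
  shows "distr (iid t std_gauss) (tuple_space t) (\<lambda>zs. \<lambda>i\<in>{..<t}. sem_F (sps i) (zs i))
       = (iid t std_gauss :: (nat \<Rightarrow> 'n \<Rightarrow> real) measure)"
proof -
  have "distr (iid t std_gauss) (tuple_space t) (\<lambda>zs. \<lambda>i\<in>{..<t}. sem_F (sps i) (zs i))
     = distr (PiM {..<t} (\<lambda>_. std_gauss)) (PiM {..<t} (\<lambda>_. std_gauss)) (\<lambda>zs. \<lambda>i\<in>{..<t}. sem_F (sps i) (zs i))"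
    unfolding iid_def using sets_iid[OF sets_std_gauss, of t]
    by (intro distr_cong) (auto simp: iid_def)
  also have "\<dots> = PiM {..<t} (\<lambda>_. std_gauss)"
  proof (rule distr_PiM_comp)
    fix i assume i: "i \<in> {..<t}"
    show "sem_F (sps i) \<in> measurable std_gauss std_gauss"
      using sem_F_meas measurable_cong_sets[OF sets_std_gauss sets_std_gauss] by blast
    have "distr std_gauss std_gauss (sem_F (sps i)) = distr std_gauss vec_space (sem_F (fst (sps i), snd (sps i)))"
      using sets_std_gauss by (intro distr_cong) auto
    also have "\<dots> = std_gauss" using bij i by (intro gauss_inv) auto
    finally show "distr std_gauss std_gauss (sem_F (sps i)) = std_gauss" .
  qed (auto simp: std_gauss_prob)
  finally show ?thesis unfolding iid_def .
qed

theorem theorem1: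
  fixes W :: "('n::finite \<Rightarrow> real) measure"
    and R :: "(('n \<Rightarrow> bool) \<times> ('n \<Rightarrow> 'n)) pmf"
    and Rt :: "(nat \<Rightarrow> ('n \<Rightarrow> bool) \<times> ('n \<Rightarrow> 'n)) pmf"
    and Adv1 :: "(('n \<Rightarrow> real) \<Rightarrow> real) set"
    and Advt :: "((nat \<Rightarrow> 'n \<Rightarrow> real) \<Rightarrow> real) set"
    and eps :: real and t :: nat
  assumes eps: "eps \<ge> 0" and t: "t \<ge> 1"
    and W: "prob_space W" "sets W = sets vec_space"
    and R_perm: "\<forall>sp\<in>set_pmf R. bij (snd sp)"
    and Rt_perm: "\<forall>sps\<in>set_pmf Rt. \<forall>i<t. bij (snd (sps i))"
    and Adv1_dist: "\<forall>D\<in>Adv1. distinguisher vec_space D"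
    and Advt_dist: "\<forall>D\<in>Advt. distinguisher (tuple_space t) D"
    and Adv1_closed: "\<forall>D\<in>Adv1. (\<lambda>z. \<integral>sp. D (sem_F sp z) \<partial>measure_pmf R) \<in> Adv1"
    and Advt_closed: "\<forall>D\<in>Advt.
          (\<lambda>zs. \<integral>sps. D (\<lambda>i\<in>{..<t}. sem_F (sps i) (zs i)) \<partial>measure_pmf Rt) \<in> Advt"
  shows "(single_undetectable W eps Adv1 \<longrightarrow> single_undetectable (sembind W R) eps Adv1)
       \<and> (multi_undetectable t W eps Advt \<longrightarrow>
            multi_undetectable_joint t (sembind_multi t W Rt) eps Advt)"
proof (intro conjI impI)
  assume H: "single_undetectable W eps Adv1"
  show "single_undetectable (sembind W R) eps Adv1"
    unfolding single_undetectable_def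
  proof
    fix D assume D: "D \<in> Adv1"
    define D' where "D' = (\<lambda>z. \<integral>sp. D (sem_F sp z) \<partial>measure_pmf R)"
    have D'A: "D' \<in> Adv1" using Adv1_closed D unfolding D'_def by blast
    have Dm: "D \<in> borel_measurable vec_space" and Db: "\<And>x. \<bar>D x\<bar> \<le> 1"
      using Adv1_dist D by (auto simp: distinguisher_def space_vec)
    have hm: "(\<lambda>(z, sp). D (sem_F sp z)) \<in> borel_measurable (M \<Otimes>\<^sub>M measure_pmf R)"
      if "sets M = sets vec_space" for M :: "('n \<Rightarrow> real) measure"
      using measurable_compose[OF Phi1_meas[OF that] Dm] by (simp add: case_prod_beta')
    have hi: "integrable (M \<Otimes>\<^sub>M measure_pmf R) (\<lambda>(z, sp). D (sem_F sp z))"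
      if "sets M = sets vec_space" "prob_space M" for M :: "('n \<Rightarrow> real) measure"
    proof (rule bnd_integrable[OF _ hm[OF that(1)]])
      interpret P: pair_prob_space M "measure_pmf R"
        using that(2) by (rule pp)
      show "finite_measure (M \<Otimes>\<^sub>M measure_pmf R)" by (rule P.P.finite_measure_axioms)
    qed (auto simp: Db)
    have fub: "(\<integral>z. D' z \<partial>M) = integral\<^sup>L (M \<Otimes>\<^sub>M measure_pmf R) (\<lambda>(z, sp). D (sem_F sp z))"
      if "sets M = sets vec_space" "prob_space M" for M :: "('n \<Rightarrow> real) measure"
    proof -
      interpret P: pair_prob_space M "measure_pmf R"
        using that(2) by (rule pp)
      show ?thesis unfolding D'_def using P.integral_fst[OF hi[OF that]] by simp
    qed
    have a: "(\<integral>x. D x \<partial>sembind W R) = (\<integral>z. D' z \<partial>W)"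
      unfolding sembind_def fub[OF W(2) W(1)]
      by (subst integral_distr[OF Phi1_meas[OF W(2)] Dm]) (simp_all add: case_prod_beta')
    have b: "(\<integral>z. D' z \<partial>std_gauss) = (\<integral>x. D x \<partial>std_gauss)"
    proof -
      interpret P: pair_prob_space std_gauss "measure_pmf R"
        using std_gauss_prob by (rule pp)
      have "(\<integral>z. D' z \<partial>std_gauss) = (\<integral>sp. (\<integral>z. D (sem_F sp z) \<partial>std_gauss) \<partial>measure_pmf R)"
        unfolding D'_def
        using P.Fubini_integral[of "\<lambda>z sp. D (sem_F sp z)"] hi[OF sets_std_gauss std_gauss_prob] by simp
      also have "\<dots> = (\<integral>sp. (\<integral>x. D x \<partial>std_gauss) \<partial>measure_pmf R)"
      proof (rule integral_cong_AE)
        show "AE sp in measure_pmf R. (\<integral>z. D (sem_F sp z) \<partial>std_gauss) = (\<integral>x. D x \<partial>std_gauss)"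
        proof (rule AE_pmfI)
          fix sp assume "sp \<in> set_pmf R"
          then have bj: "bij (snd sp)" using R_perm by blast
          have "(\<integral>z. D (sem_F sp z) \<partial>std_gauss) = (\<integral>x. D x \<partial>distr std_gauss vec_space (sem_F (fst sp, snd sp)))"
            using integral_distr[OF sem_F_meas'[OF sets_std_gauss] Dm] by simp
          also have "\<dots> = (\<integral>x. D x \<partial>std_gauss)" using gauss_inv[OF bj, of "fst sp"] by simp
          finally show "(\<integral>z. D (sem_F sp z) \<partial>std_gauss) = (\<integral>x. D x \<partial>std_gauss)" .
        qed
      qed auto
      also have "\<dots> = (\<integral>x. D x \<partial>std_gauss)" by simp
      finally show ?thesis .
    qed
    show "\<bar>(\<integral>x. D x \<partial>sembind W R) - (\<integral>x. D x \<partial>std_gauss)\<bar> \<le> eps"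
      using H D'A unfolding single_undetectable_def a b[symmetric] by blast
  qed
next
  assume H: "multi_undetectable t W eps Advt"
  show "multi_undetectable_joint t (sembind_multi t W Rt) eps Advt"
    unfolding multi_undetectable_joint_def
  proof
    fix D assume D: "D \<in> Advt"
    define D' where "D' = (\<lambda>zs. \<integral>sps. D (\<lambda>i\<in>{..<t}. sem_F (sps i) (zs i)) \<partial>measure_pmf Rt)"
    have D'A: "D' \<in> Advt" using Advt_closed D unfolding D'_def by blast
    have Dm: "D \<in> borel_measurable (tuple_space t)" and Db: "\<And>x. x \<in> {..<t} \<rightarrow>\<^sub>E UNIV \<Longrightarrow> \<bar>D x\<bar> \<le> 1"
      using Advt_dist D by (auto simp: distinguisher_def space_tuple)
    have hm: "(\<lambda>(zs, sps). D (\<lambda>i\<in>{..<t}. sem_F (sps i) (zs i))) \<in> borel_measurable (M \<Otimes>\<^sub>M measure_pmf Rt)"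
      if "sets M = sets (tuple_space t)" for M :: "(nat \<Rightarrow> 'n \<Rightarrow> real) measure"
      using measurable_compose[OF Phit_meas[OF that] Dm] by (simp add: case_prod_beta')
    have hi: "integrable (M \<Otimes>\<^sub>M measure_pmf Rt) (\<lambda>(zs, sps). D (\<lambda>i\<in>{..<t}. sem_F (sps i) (zs i)))"
      if "sets M = sets (tuple_space t)" "prob_space M" for M :: "(nat \<Rightarrow> 'n \<Rightarrow> real) measure"
    proof (rule bnd_integrable[OF _ hm[OF that(1)]])
      interpret P: pair_prob_space M "measure_pmf Rt"
        using that(2) by (rule pp)
      show "finite_measure (M \<Otimes>\<^sub>M measure_pmf Rt)" by (rule P.P.finite_measure_axioms)
    qed (auto intro!: Db)
    have fub: "(\<integral>z. D' z \<partial>M) = integral\<^sup>L (M \<Otimes>\<^sub>M measure_pmf Rt) (\<lambda>(zs, sps). D (\<lambda>i\<in>{..<t}. sem_F (sps i) (zs i)))"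
      if "sets M = sets (tuple_space t)" "prob_space M" for M :: "(nat \<Rightarrow> 'n \<Rightarrow> real) measure"
    proof -
      interpret P: pair_prob_space M "measure_pmf Rt"
        using that(2) by (rule pp)
      show ?thesis unfolding D'_def using P.integral_fst[OF hi[OF that]] by simp
    qed
    have a: "(\<integral>x. D x \<partial>sembind_multi t W Rt) = (\<integral>z. D' z \<partial>iid t W)"
      unfolding sembind_multi_def fub[OF sets_iid[OF W(2)] prob_iid[OF W(1)]]
      by (subst integral_distr[OF Phit_meas[OF sets_iid[OF W(2)]] Dm]) (simp_all add: case_prod_beta')
    have G: "sets (iid t std_gauss) = sets (tuple_space t)" "prob_space (iid t std_gauss)"
      using sets_iid[OF sets_std_gauss] prob_iid[OF std_gauss_prob] by auto
    have b: "(\<integral>z. D' z \<partial>iid t std_gauss) = (\<integral>x. D x \<partial>iid t std_gauss)"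
    proof -
      interpret P: pair_prob_space "iid t std_gauss" "measure_pmf Rt"
        using G(2) by (rule pp)
      have "(\<integral>z. D' z \<partial>iid t std_gauss)
          = (\<integral>sps. (\<integral>zs. D (\<lambda>i\<in>{..<t}. sem_F (sps i) (zs i)) \<partial>iid t std_gauss) \<partial>measure_pmf Rt)"
        unfolding D'_def
        using P.Fubini_integral[of "\<lambda>zs sps. D (\<lambda>i\<in>{..<t}. sem_F (sps i) (zs i))"] hi[OF G] by simp
      also have "\<dots> = (\<integral>sps. (\<integral>x. D x \<partial>iid t std_gauss) \<partial>measure_pmf Rt)"
      proof (rule integral_cong_AE)
        show "AE sps in measure_pmf Rt. (\<integral>zs. D (\<lambda>i\<in>{..<t}. sem_F (sps i) (zs i)) \<partial>iid t std_gauss)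
              = (\<integral>x. D x \<partial>iid t std_gauss)"
        proof (rule AE_pmfI)
          fix sps assume "sps \<in> set_pmf Rt"
          then have bj: "\<forall>i<t. bij (snd (sps i))" using Rt_perm by blast
          have mm: "(\<lambda>zs. \<lambda>i\<in>{..<t}. sem_F (sps i) (zs i)) \<in> measurable (iid t std_gauss) (tuple_space t)"
            using measurable_cong_sets[OF G(1) refl]
            unfolding tuple_space_def
            by (auto intro!: measurable_restrict measurable_compose[OF _ sem_F_meas]
                measurable_component_singleton)
          have "(\<integral>zs. D (\<lambda>i\<in>{..<t}. sem_F (sps i) (zs i)) \<partial>iid t std_gauss)
             = (\<integral>x. D x \<partial>distr (iid t std_gauss) (tuple_space t) (\<lambda>zs. \<lambda>i\<in>{..<t}. sem_F (sps i) (zs i)))"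
            using integral_distr[OF mm Dm] by simp
          also have "\<dots> = (\<integral>x. D x \<partial>iid t std_gauss)" using gauss_inv_multi[OF bj] by simp
          finally show "(\<integral>zs. D (\<lambda>i\<in>{..<t}. sem_F (sps i) (zs i)) \<partial>iid t std_gauss)
              = (\<integral>x. D x \<partial>iid t std_gauss)" .
        qed
      qed auto
      also have "\<dots> = (\<integral>x. D x \<partial>iid t std_gauss)" by simp
      finally show ?thesis .
    qed
    show "\<bar>(\<integral>x. D x \<partial>sembind_multi t W Rt) - (\<integral>x. D x \<partial>iid t std_gauss)\<bar> \<le> eps"
      using H D'A unfolding multi_undetectable_def multi_undetectable_joint_def a b[symmetric] by blast
  qed
qed

end
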